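(* Let $n>3$ and let $\mathcal{L}\subseteq\mathcal{L}_n$ be a linear subspace that is a Jordan algebra, is invariant under the conjugation action of $S_n$, and contains $\mathrm{Anti}_n$. Then $\mathrm{DS}_n\subseteq\mathcal{L}$.
   Context: $\mathbf{1}\in\mathbb{R}^n$ is the all-ones column vector; $\mathcal{L}_n=\{Q\in \mathrm{Mat}_n(\mathbb{R}): Q\mathbf{1}=0\}$. $\mathrm{DS}_n:=\{Q\in\mathcal{L}_n:\mathbf{1}^TQ=0\}$ (zero row and column sums); $\mathrm{Anti}_n$ is the space of antisymmetric matrices in $\mathcal{L}_n$ (isomorphic as $S_n$-module to the irreducible $\{n-2,1^2\}$). For $\sigma\in S_n$, $K_\sigma$ is the permutation matrix with $e_iK_\sigma=e_{\sigma(i)}$, and $S_n$ acts by $\sigma\cdot X=K_\sigma^TXK_\sigma$. A Jordan algebra is a subspace closed under $AB+BA$. *)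

theory Defs
  imports "HOL-Analysis.Analysis" "HOL-Combinatorics.Permutations"
begin

text \<open>n x n real matrices are modelled as real^'n^'n with a finite index type 'n, n = CARD('n).\<close>

definition ones :: "real ^ 'n" where
  "ones = (\<chi> i. 1)"

definition Lmat :: "(real ^ 'n ^ 'n) set" where
  "Lmat = {Q. Q *v ones = 0}"

definition DSmat :: "(real ^ 'n ^ 'n) set" where
  "DSmat = {Q. Q \<in> Lmat \<and> ones v* Q = 0}"

definition Antimat :: "(real ^ 'n ^ 'n) set" where
  "Antimat = {Q. Q \<in> Lmat \<and> transpose Q = - Q}"

definition permmat :: "('n \<Rightarrow> 'n) \<Rightarrow> real ^ 'n ^ 'n" where
  "permmat \<sigma> = (\<chi> i j. if \<sigma> i = j then 1 else 0)"

definition perm_act :: "('n \<Rightarrow> 'n) \<Rightarrow> real ^ 'n ^ 'n \<Rightarrow> real ^ 'n ^ 'n" where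
  "perm_act \<sigma> X = transpose (permmat \<sigma>) ** X ** permmat \<sigma>"

definition jordan_closed :: "(real ^ 'n ^ 'n) set \<Rightarrow> bool" where
  "jordan_closed L \<longleftrightarrow> (\<forall>A\<in>L. \<forall>B\<in>L. A ** B + B ** A \<in> L)"

definition Sn_invariant :: "(real ^ 'n ^ 'n) set \<Rightarrow> bool" where
  "Sn_invariant L \<longleftrightarrow> (\<forall>\<sigma>. \<sigma> permutes (UNIV :: 'n set) \<longrightarrow> (\<forall>X\<in>L. perm_act \<sigma> X \<in> L))"

end

theory Submission imports Defs begin

definition U :: "'n \<Rightarrow> 'n \<Rightarrow> real^'n^'n" where
  "U p q = (\<chi> a b. if a = p \<and> b = q then 1 else 0)"

definition Cm :: "'n \<Rightarrow> 'n \<Rightarrow> 'n \<Rightarrow> real^'n^'n" where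
  "Cm a b c = U a b - U b a + U b c - U c b + U c a - U a c"

definition Mm :: "'n \<Rightarrow> 'n \<Rightarrow> real^'n^'n" where
  "Mm a b = U a b + U b a - U a a - U b b"

definition Jp :: "real^'n^'n \<Rightarrow> real^'n^'n \<Rightarrow> real^'n^'n" where
  "Jp A B = A ** B + B ** A"

lemma mm_radd: "(A + B) ** C = A ** C + B ** (C::real^'n^'n)"
  by (vector matrix_matrix_mult_def sum.distrib[symmetric] field_simps)
lemma mm_rsub: "(A - B) ** C = A ** C - B ** (C::real^'n^'n)"
  by (vector matrix_matrix_mult_def sum_subtractf[symmetric] field_simps)
lemma mm_lsub: "C ** (A - B) = C ** A - C ** (B::real^'n^'n)"
  by (vector matrix_matrix_mult_def sum_subtractf[symmetric] field_simps)

lemma U_mult: "U p q ** U r s = (if q = r then U p s else 0)"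
proof -
  have "(U p q ** U r s) $ a $ b = (if q = r then U p s else 0) $ a $ b" for a b
  proof -
    have e: "(\<lambda>k. (if a = p \<and> k = q then 1 else 0) * (if k = r \<and> b = s then 1 else 0))
      = (\<lambda>k. if k = q then (if a = p \<and> q = r \<and> b = s then 1 else 0) else (0::real))"
      by (rule ext) auto
    have "(U p q ** U r s) $ a $ b = (\<Sum>k\<in>UNIV. (if a = p \<and> k = q then 1 else 0) * (if k = r \<and> b = s then 1 else (0::real)))"
      by (simp only: matrix_matrix_mult_def U_def vec_lambda_beta)
    also have "\<dots> = (if a = p \<and> q = r \<and> b = s then 1 else 0)"
      by (simp only: e sum.delta finite UNIV_I if_True)
    finally show ?thesis by (auto simp: U_def)
  qed
  then show ?thesis by (simp add: vec_eq_iff)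
qed

lemma key:
  assumes "i \<noteq> j" "i \<noteq> k" "i \<noteq> l" "j \<noteq> k" "j \<noteq> l" "k \<noteq> l"
  shows "(8::real) *\<^sub>R Mm i j = 2 *\<^sub>R Jp (Cm i j k) (Cm i j k) + 2 *\<^sub>R Jp (Cm i j l) (Cm i j l)
     - Jp (Cm i k l) (Cm i k l) - Jp (Cm j k l) (Cm j k l) - 2 *\<^sub>R Jp (Cm i j k) (Cm i j l)"
proof -
  note d = assms assms[symmetric]
  show ?thesis
    unfolding Jp_def Cm_def
    apply (simp only: mm_radd mm_rsub mm_lsub matrix_add_ldistrib U_mult)
    apply (simp add: d)
    apply (simp add: vec_eq_iff Mm_def)
    done
qed
lemma U_ones: "U p q *v ones = (\<chi> x. if x = p then 1 else 0)"
  by (simp add: vec_eq_iff U_def matrix_vector_mult_def ones_def if_distrib if_distribR cong: if_cong)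

lemma U_transpose: "transpose (U p q) = U q p"
  by (auto simp: vec_eq_iff U_def transpose_def)

lemma transpose_add': "transpose (A + B) = transpose A + transpose (B::real^'n^'n)"
  by (simp add: vec_eq_iff transpose_def)
lemma transpose_diff': "transpose (A - B) = transpose A - transpose (B::real^'n^'n)"
  by (simp add: vec_eq_iff transpose_def)

lemma Cm_Anti: "Cm a b c \<in> Antimat"
proof -
  have "Cm a b c *v ones = 0"
    unfolding Cm_def
    by (simp add: matrix_vector_mult_add_rdistrib matrix_vector_mult_diff_rdistrib U_ones vec_eq_iff)
  moreover have "transpose (Cm a b c) = - Cm a b c"
    unfolding Cm_def by (simp add: transpose_add' transpose_diff' U_transpose)
  ultimately show ?thesis by (simp add: Antimat_def Lmat_def)
qed

lemma rowsum_decomp: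
  fixes X :: "real^'n^'n"
  assumes "X *v ones = 0"
  shows "(\<Sum>i\<in>UNIV. \<Sum>j\<in>UNIV. X$i$j *\<^sub>R (U i j - U i i)) = X"
proof -
  have r: "(\<Sum>j\<in>UNIV. X$a$j) = 0" for a
  proof -
    have "(X *v ones) $ a = 0" using assms by simp
    then show ?thesis by (simp add: matrix_vector_mult_def ones_def)
  qed
  have "(\<Sum>i\<in>UNIV. \<Sum>j\<in>UNIV. X$i$j *\<^sub>R (U i j - U i i)) $ a $ b = X $ a $ b" for a b
  proof -
    have e: "(\<lambda>i. \<Sum>j\<in>UNIV. X$i$j * ((if a = i \<and> b = j then 1 else 0) - (if a = i \<and> b = i then 1 else 0)))
       = (\<lambda>i. if a = i then (\<Sum>j\<in>UNIV. X$a$j * ((if b = j then 1 else 0) - (if a = b then 1 else 0))) else 0)"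
      by (rule ext) simp
    have e2: "(\<lambda>j. X$a$j * (if b = j then 1 else 0)) = (\<lambda>j. if b = j then X$a$b else 0)"
      by (rule ext) simp
    have "(\<Sum>i\<in>UNIV. \<Sum>j\<in>UNIV. X$i$j *\<^sub>R (U i j - U i i)) $ a $ b
       = (\<Sum>i\<in>UNIV. \<Sum>j\<in>UNIV. X$i$j * ((if a = i \<and> b = j then 1 else 0) - (if a = i \<and> b = i then 1 else 0)))"
      by (simp only: sum_component vector_scaleR_component vector_minus_component U_def vec_lambda_beta real_scaleR_def)
    also have "\<dots> = (\<Sum>j\<in>UNIV. X$a$j * ((if b = j then 1 else 0) - (if a = b then 1 else 0)))"
      by (simp only: e sum.delta' finite UNIV_I if_True)
    also have "\<dots> = (\<Sum>j\<in>UNIV. X$a$j * (if b = j then 1 else 0)) - (\<Sum>j\<in>UNIV. X$a$j) * (if a = b then 1 else 0)"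
      by (simp only: right_diff_distrib sum_subtractf sum_distrib_right)
    also have "\<dots> = X$a$b"
      by (simp only: e2 sum.delta' finite UNIV_I if_True r mult_zero_left diff_zero)
    finally show ?thesis .
  qed
  then show ?thesis by (simp add: vec_eq_iff)
qed

lemma smv: "((c::real) *\<^sub>R A) *v x = c *\<^sub>R (A *v (x::real^'n))"
  by (simp add: vec_eq_iff matrix_vector_mult_def sum_distrib_left mult.assoc)

lemma Mm_in:
  fixes L :: "(real ^ 'n ^ 'n) set"
  assumes card: "CARD('n) > 3" and sub: "subspace L" and jc: "jordan_closed L"
    and anti: "Antimat \<subseteq> L"
  shows "Mm i j \<in> L"
proof (cases "i = j")
  case True
  have "Mm i j = 0" using True by (simp add: Mm_def)
  then show ?thesis using sub by (simp add: subspace_0)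
next
  case False
  have "\<exists>k. k \<notin> {i, j}"
  proof (rule ccontr)
    assume "\<not> ?thesis"
    then have "(UNIV::'n set) \<subseteq> {i,j}" by auto
    then have "CARD('n) \<le> card {i,j}" by (simp add: card_mono)
    also have "\<dots> \<le> 2" by (simp add: card_insert_if)
    finally show False using card by simp
  qed
  then obtain k where k: "k \<notin> {i,j}" by blast
  have "\<exists>l. l \<notin> {i, j, k}"
  proof (rule ccontr)
    assume "\<not> ?thesis"
    then have "(UNIV::'n set) \<subseteq> {i,j,k}" by auto
    then have "CARD('n) \<le> card {i,j,k}" by (simp add: card_mono)
    also have "\<dots> \<le> 3" by (simp add: card_insert_if)
    finally show False using card by simp
  qed
  then obtain l where l: "l \<notin> {i,j,k}" by blast
  have C: "Cm a b c \<in> L" for a b c using Cm_Anti anti by blast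
  have J: "Jp (Cm a b c) (Cm a' b' c') \<in> L" for a b c a' b' c'
    using jc C unfolding jordan_closed_def Jp_def by blast
  have "(8::real) *\<^sub>R Mm i j \<in> L"
    apply (subst key[of i j k l])
    using False k l apply auto[6]
    by (intro subspace_diff[OF sub] subspace_add[OF sub] subspace_scale[OF sub] J)
  then have "(1/8::real) *\<^sub>R ((8::real) *\<^sub>R Mm i j) \<in> L" by (rule subspace_scale[OF sub])
  then show ?thesis by simp
qed

theorem mainTheorem16:
  fixes L :: "(real ^ 'n ^ 'n) set"
  assumes "CARD('n) > 3"
    and "subspace L"
    and "L \<subseteq> Lmat"
    and "jordan_closed L"
    and "Sn_invariant L"
    and "Antimat \<subseteq> L"
  shows "DSmat \<subseteq> L"
proof
  fix Q :: "real^'n^'n"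
  assume Q: "Q \<in> DSmat"
  have r: "Q *v ones = 0" and c: "transpose Q *v ones = 0"
    using Q by (auto simp: DSmat_def Lmat_def)
  define A where "A = (1/2::real) *\<^sub>R (Q - transpose Q)"
  define S where "S = (1/2::real) *\<^sub>R (Q + transpose Q)"
  have QAS: "Q = A + S"
    unfolding A_def S_def by (simp add: vec_eq_iff diff_divide_distrib add_divide_distrib)
  have "A *v ones = 0"
    unfolding A_def by (simp only: smv matrix_vector_mult_diff_rdistrib r c diff_zero scaleR_zero_right)
  moreover have "transpose A = - A"
    unfolding A_def by (simp add: vec_eq_iff transpose_def field_simps)
  ultimately have "A \<in> Antimat" by (simp add: Antimat_def Lmat_def)
  then have AL: "A \<in> L" using assms(6) by blast
  have Sr: "S *v ones = 0" unfolding S_def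
    by (simp only: smv matrix_vector_mult_add_rdistrib r c add_0 scaleR_zero_right)
  have Ssym: "S$i$j = S$j$i" for i j unfolding S_def by (simp add: transpose_def)
  have M: "Mm i j = (U i j - U i i) + (U j i - U j j)" for i j
    by (simp add: Mm_def algebra_simps)
  have "(\<Sum>i\<in>UNIV. \<Sum>j\<in>UNIV. S$i$j *\<^sub>R Mm i j)
      = (\<Sum>i\<in>UNIV. \<Sum>j\<in>UNIV. S$i$j *\<^sub>R (U i j - U i i))
        + (\<Sum>i\<in>UNIV. \<Sum>j\<in>UNIV. S$i$j *\<^sub>R (U j i - U j j))"
    by (simp add: M scaleR_add_right sum.distrib)
  also have "(\<Sum>i\<in>UNIV. \<Sum>j\<in>UNIV. S$i$j *\<^sub>R (U j i - U j j))
      = (\<Sum>j\<in>UNIV. \<Sum>i\<in>UNIV. S$j$i *\<^sub>R (U j i - U j j))"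
    by (subst sum.swap) (simp add: Ssym)
  finally have "(\<Sum>i\<in>UNIV. \<Sum>j\<in>UNIV. S$i$j *\<^sub>R Mm i j) = S + S"
    using rowsum_decomp[OF Sr] by simp
  moreover have "(1/2::real) *\<^sub>R (S + S) = ((1/2 + 1/2)::real) *\<^sub>R S"
    by (simp only: scaleR_add_right scaleR_add_left)
  ultimately have Seq: "S = (1/2::real) *\<^sub>R (\<Sum>i\<in>UNIV. \<Sum>j\<in>UNIV. S$i$j *\<^sub>R Mm i j)"
    by simp
  have "(\<Sum>i\<in>UNIV. \<Sum>j\<in>UNIV. S$i$j *\<^sub>R Mm i j) \<in> L"
    using Mm_in[OF assms(1,2,4,6)]
    by (intro subspace_sum[OF assms(2)] subspace_scale[OF assms(2)]) auto
  then have "(1/2::real) *\<^sub>R (\<Sum>i\<in>UNIV. \<Sum>j\<in>UNIV. S$i$j *\<^sub>R Mm i j) \<in> L"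
    by (rule subspace_scale[OF assms(2)])
  then have SL: "S \<in> L" by (simp only: Seq[symmetric])
  show "Q \<in> L" by (subst QAS) (rule subspace_add[OF assms(2) AL SL])
qed

end
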